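(* Let $m\le k\le n$ be positive integers and $\mathbf a_1,\dots,\mathbf a_n\in\mathbb R^m$. Let $w^*=\max\{[\det(\sum_{i\in S}\mathbf a_i\mathbf a_i^\top)]^{1/m}: S\subseteq[n],\ |S|=k\}$, and let $(\hat{\mathbf x},\hat w)$ be an optimal solution of the convex relaxation $$\hat w=\max_{\mathbf x,w}\Big\{w:\ w\le \Big[\det\Big(\sum_{i\in[n]}x_i\mathbf a_i\mathbf a_i^\top\Big)\Big]^{1/m},\ \sum_{i\in[n]}x_i=k,\ \mathbf x\in[0,1]^n\Big\}.$$ Let $\alpha\in(0,1]$ and let $\mu$ be a probability distribution on the subsets of $[n]$ of size $k$ which is $m$-wise $\alpha$-positively correlated with respect to $\hat{\mathbf x}$, i.e. for a random set $\mathcal S\sim\mu$ and every $T\subseteq[n]$ with $|T|=m$ we have $\Pr[T\subseteq\mathcal S]\ge \alpha^m\prod_{i\in T}\hat x_i$. Then $$\Big\{\mathbb E\Big[\det\Big(\sum_{i\in\mathcal S}\mathbf a_i\mathbf a_i^\top\Big)\Big]\Big\}^{1/m}\ge \alpha\, w^*.$$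
   Context: $[n]=\{1,\dots,n\}$. The expectation is with respect to $\mathcal S\sim\mu$. *)

theory Defs
  imports "HOL-Analysis.Analysis" "HOL-Probability.Probability"
begin

definition outer :: "real^'m \<Rightarrow> real^'m^'m" where
  "outer v = (\<chi> r c. v $ r * v $ c)"

definition wmat :: "(nat \<Rightarrow> real^'m) \<Rightarrow> nat set \<Rightarrow> (nat \<Rightarrow> real) \<Rightarrow> real^'m^'m" where
  "wmat a I x = (\<Sum>i\<in>I. x i *\<^sub>R outer (a i))"

definition smat :: "(nat \<Rightarrow> real^'m) \<Rightarrow> nat set \<Rightarrow> real^'m^'m" where
  "smat a S = (\<Sum>i\<in>S. outer (a i))"

definition wstar :: "nat \<Rightarrow> nat \<Rightarrow> (nat \<Rightarrow> real^'m) \<Rightarrow> real" where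
  "wstar n k a = Max {root CARD('m) (det (smat a S)) | S. S \<subseteq> {1..n} \<and> card S = k}"

definition relax_feasible :: "nat \<Rightarrow> nat \<Rightarrow> (nat \<Rightarrow> real^'m) \<Rightarrow> (nat \<Rightarrow> real) \<Rightarrow> real \<Rightarrow> bool" where
  "relax_feasible n k a x w \<longleftrightarrow>
     w \<le> root CARD('m) (det (wmat a {1..n} x)) \<and>
     (\<Sum>i\<in>{1..n}. x i) = real k \<and>
     (\<forall>i\<in>{1..n}. 0 \<le> x i \<and> x i \<le> 1)"

definition relax_optimal :: "nat \<Rightarrow> nat \<Rightarrow> (nat \<Rightarrow> real^'m) \<Rightarrow> (nat \<Rightarrow> real) \<Rightarrow> real \<Rightarrow> bool" where
  "relax_optimal n k a xh wh \<longleftrightarrow>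
     relax_feasible n k a xh wh \<and> (\<forall>x w. relax_feasible n k a x w \<longrightarrow> w \<le> wh)"

definition pos_corr :: "nat \<Rightarrow> nat \<Rightarrow> real \<Rightarrow> (nat \<Rightarrow> real) \<Rightarrow> nat set pmf \<Rightarrow> bool" where
  "pos_corr n m \<alpha> x \<mu> \<longleftrightarrow>
     (\<forall>T. T \<subseteq> {1..n} \<and> card T = m \<longrightarrow>
        measure_pmf.prob \<mu> {S. T \<subseteq> S} \<ge> \<alpha> ^ m * (\<Prod>i\<in>T. x i))"

end

theory Submission
  imports Defs
begin

definition hh :: "(nat \<Rightarrow> real^'m) \<Rightarrow> ('m \<Rightarrow> nat) \<Rightarrow> real" where
  "hh a f = (\<Prod>r\<in>UNIV. a (f r) $ r) * det (\<chi> r. a (f r))"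

definition GG :: "(nat \<Rightarrow> real^'m) \<Rightarrow> nat set \<Rightarrow> real" where
  "GG a T = (\<Sum>f\<in>{f::'m\<Rightarrow>nat. range f = T}. hh a f)"

lemma wmat_rows: "wmat a I x = (\<chi> r. \<Sum>i\<in>I. (x i * a i $ r) *s a i)"
  by (simp add: vec_eq_iff wmat_def outer_def sum_component mult.assoc)

lemma finite_funs: "finite I \<Longrightarrow> finite {f::'m::finite \<Rightarrow> nat. \<forall>r. f r \<in> I}"
proof -
  assume "finite I"
  then have "finite (PiE (UNIV::'m set) (\<lambda>_. I))" by (simp add: finite_PiE)
  moreover have "PiE (UNIV::'m set) (\<lambda>_. I) = {f. \<forall>r. f r \<in> I}" by (auto simp: PiE_def Pi_def)
  ultimately show ?thesis by simp
qed

lemma det_rows_sum_gen: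
  fixes a :: "'n::finite \<Rightarrow> 'b \<Rightarrow> real^'n" and S :: "'b set"
  assumes fS: "finite S" and fT: "finite T"
  shows "det ((\<chi> i. if i \<in> T then sum (a i) S else c i)::real^'n^'n) =
    (\<Sum>f\<in>PiE T (\<lambda>_. S). det((\<chi> i. if i \<in> T then a i (f i) else c i)::real^'n^'n))"
  using fT
proof (induct T arbitrary: c set: finite)
  case empty
  then show ?case by simp
next
  case (insert z T c)
  have thif: "\<And>a b c d. (if a \<or> b then c else d) = (if a then c else if b then c else d)"
    by simp
  have thif2: "\<And>a b c d e. (if a then b else if c then d else e) =
     (if c then (if a then b else d) else (if a then b else e))"
    by simp
  from \<open>z \<notin> T\<close> have nz: "\<And>i. i \<in> T \<Longrightarrow> i \<noteq> z"
    by auto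
  have "det (\<chi> i. if i \<in> insert z T then sum (a i) S else c i) =
    det (\<chi> i. if i = z then sum (a i) S else if i \<in> T then sum (a i) S else c i)"
    unfolding insert_iff thif ..
  also have "\<dots> = (\<Sum>j\<in>S. det (\<chi> i. if i \<in> T then sum (a i) S else if i = z then a i j else c i))"
    unfolding det_linear_row_sum[OF fS]
    by (subst thif2) (simp add: nz cong: if_cong)
  also have "\<dots> = (\<Sum>j\<in>S. \<Sum>f\<in>PiE T (\<lambda>_. S). det (\<chi> i. if i \<in> T then a i (f i) else if i = z then a i j else c i))"
    by (subst insert.hyps) simp
  also have "\<dots> = (\<Sum>(j,f)\<in>S \<times> PiE T (\<lambda>_. S). det (\<chi> i. if i \<in> T then a i (f i) else if i = z then a i j else c i))"
    by (simp add: sum.cartesian_product)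
  also have "\<dots> = (\<Sum>g\<in>PiE (insert z T) (\<lambda>_. S). det (\<chi> i. if i \<in> insert z T then a i (g i) else c i))"
    using \<open>z \<notin> T\<close>
    by (intro sum.reindex_bij_witness[where i="\<lambda>g. (g z, g(z:=undefined))" and j="\<lambda>(j,f). f(z:=j)"])
       (auto intro!: arg_cong[where f=det] simp: vec_eq_iff PiE_def extensional_def)
  finally show ?case .
qed

lemma L1:
  fixes a :: "nat \<Rightarrow> real^'m"
  assumes "finite I"
  shows "det (wmat a I x) = (\<Sum>f\<in>PiE UNIV (\<lambda>_. I). (\<Prod>r\<in>UNIV. x (f r)) * hh a f)"
proof -
  have "det (wmat a I x) = det ((\<chi> r. if r \<in> UNIV then \<Sum>i\<in>I. (x i * a i $ r) *s a i else 0)::real^'m^'m)"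
    by (simp add: wmat_rows)
  also have "\<dots> = (\<Sum>f\<in>PiE UNIV (\<lambda>_. I). det ((\<chi> r. (x (f r) * a (f r) $ r) *s a (f r))::real^'m^'m))"
    by (subst det_rows_sum_gen[OF assms]) auto
  also have "\<dots> = (\<Sum>f\<in>PiE UNIV (\<lambda>_. I). (\<Prod>r\<in>UNIV. x (f r)) * hh a f)"
    unfolding det_rows_mul hh_def by (simp add: prod.distrib mult.assoc)
  finally show ?thesis .
qed

lemma hh_noninj: "\<not> inj f \<Longrightarrow> hh a f = 0"
proof -
  assume "\<not> inj f"
  then obtain i j where "f i = f j" "i \<noteq> j" unfolding inj_def by blast
  then have "det (\<chi> r. a (f r)) = 0"
    by (intro det_identical_rows[of i j]) (auto simp: row_def vec_eq_iff)
  then show ?thesis by (simp add: hh_def)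
qed

lemma L2:
  fixes a :: "nat \<Rightarrow> real^'m"
  assumes fI: "finite I"
  shows "(\<Sum>f\<in>PiE UNIV (\<lambda>_. I). (\<Prod>r\<in>UNIV. x (f r)) * hh a f)
       = (\<Sum>T\<in>{T. T \<subseteq> I \<and> card T = CARD('m)}. (\<Prod>i\<in>T. x i) * GG a T)"
proof -
  let ?P = "PiE (UNIV::'m set) (\<lambda>_. I)"
  let ?Q = "{f\<in>?P. inj f}"
  let ?TT = "{T. T \<subseteq> I \<and> card T = CARD('m)}"
  have fP: "finite ?P" using fI by (simp add: finite_PiE)
  have "(\<Sum>f\<in>?P. (\<Prod>r\<in>UNIV. x (f r)) * hh a f) = (\<Sum>f\<in>?Q. (\<Prod>r\<in>UNIV. x (f r)) * hh a f)"
    using fP by (intro sum.mono_neutral_right) (auto simp: hh_noninj)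
  also have "\<dots> = (\<Sum>T\<in>?TT. \<Sum>f\<in>{f. f \<in> ?Q \<and> range f = T}. (\<Prod>r\<in>UNIV. x (f r)) * hh a f)"
  proof (rule sum.group[symmetric])
    show "finite ?Q" using fP by simp
    show "finite ?TT" using fI by (auto intro: finite_subset[of _ "Pow I"])
    show "range ` ?Q \<subseteq> ?TT"
      by (auto simp: PiE_def Pi_def inj_on_iff_eq_card[symmetric])
  qed
  also have "\<dots> = (\<Sum>T\<in>?TT. (\<Prod>i\<in>T. x i) * GG a T)"
  proof (rule sum.cong[OF refl])
    fix T assume T: "T \<in> ?TT"
    have eq: "{f. f \<in> ?Q \<and> range f = T} = {f. range f = T}"
      using T by (auto simp: PiE_def Pi_def inj_on_iff_eq_card)
    have "(\<Sum>f\<in>{f. range f = T}. (\<Prod>r\<in>UNIV. x (f r)) * hh a f)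
        = (\<Sum>f\<in>{f. range f = T}. (\<Prod>i\<in>T. x i) * hh a f)"
    proof (rule sum.cong[OF refl])
      fix f :: "'m \<Rightarrow> nat" assume "f \<in> {f. range f = T}"
      then have rf: "range f = T" by simp
      then have "inj f" using T by (simp add: inj_on_iff_eq_card)
      then have "(\<Prod>i\<in>range f. x i) = (\<Prod>r\<in>UNIV. x (f r))"
        by (simp add: prod.reindex)
      then show "(\<Prod>r\<in>UNIV. x (f r)) * hh a f = (\<Prod>i\<in>T. x i) * hh a f"
        using rf by simp
    qed
    then show "(\<Sum>f\<in>{f. f \<in> ?Q \<and> range f = T}. (\<Prod>r\<in>UNIV. x (f r)) * hh a f) = (\<Prod>i\<in>T. x i) * GG a T"
      unfolding eq GG_def by (simp add: sum_distrib_left)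
  qed
  finally show ?thesis .
qed

lemma L3:
  fixes a :: "nat \<Rightarrow> real^'m"
  assumes cT: "card T = CARD('m)"
  shows "0 \<le> GG a T"
proof -
  have fT: "finite T" using cT by (metis card_gt_0_iff finite_UNIV_card_ge_0 zero_less_card_finite card.infinite less_irrefl)
  obtain \<sigma> :: "'m \<Rightarrow> nat" where bs: "bij_betw \<sigma> UNIV T"
    using finite_same_card_bij[OF finite_class.finite_UNIV fT] cT by metis
  then have rs: "range \<sigma> = T" and isg: "inj \<sigma>" by (auto simp: bij_betw_def)
  define B where "B = (\<chi> r. a (\<sigma> r))"
  let ?PU = "{p::'m\<Rightarrow>'m. p permutes UNIV}"
  have seteq: "{f::'m\<Rightarrow>nat. range f = T} = (\<lambda>p. \<sigma> \<circ> p) ` ?PU"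
  proof
    show "(\<lambda>p. \<sigma> \<circ> p) ` ?PU \<subseteq> {f. range f = T}"
    proof
      fix f assume "f \<in> (\<lambda>p. \<sigma> \<circ> p) ` ?PU"
      then obtain p where p: "p permutes UNIV" and f: "f = \<sigma> \<circ> p" by blast
      have "range f = \<sigma> ` range p" by (simp add: f image_comp)
      also have "range p = UNIV" using p by (simp add: permutes_image)
      finally show "f \<in> {f. range f = T}" using rs by simp
    qed
    show "{f. range f = T} \<subseteq> (\<lambda>p. \<sigma> \<circ> p) ` ?PU"
    proof
      fix f :: "'m \<Rightarrow> nat" assume "f \<in> {f. range f = T}"
      then have rf: "range f = T" by simp
      then have injf: "inj f" using cT fT by (simp add: inj_on_iff_eq_card)
      define p where "p = inv \<sigma> \<circ> f"
      have sp: "\<sigma> \<circ> p = f" unfolding p_def using rf rs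
        by (auto simp: fun_eq_iff f_inv_into_f)
      have "inj p" using injf sp by (metis inj_on_imageI2 inj_on_subset subset_UNIV)
      then have "bij p" by (simp add: bij_def finite_UNIV_inj_surj)
      then have "p permutes UNIV" by (simp add: permutes_univ bij_iff)
      then show "f \<in> (\<lambda>p. \<sigma> \<circ> p) ` ?PU" using sp by blast
    qed
  qed
  have injc: "inj_on (\<lambda>p. \<sigma> \<circ> p) ?PU"
    using isg unfolding inj_on_def fun_eq_iff o_def by blast
  have "GG a T = (\<Sum>p\<in>?PU. hh a (\<sigma> \<circ> p))"
    unfolding GG_def seteq by (simp add: sum.reindex[OF injc])
  also have "\<dots> = (\<Sum>p\<in>?PU. det B * (of_int (sign p) * (\<Prod>r\<in>UNIV. transpose B $ r $ p r)))"
  proof (rule sum.cong[OF refl])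
    fix p assume "p \<in> ?PU"
    then have p: "p permutes UNIV" by simp
    have "det (\<chi> r. a ((\<sigma> \<circ> p) r)) = det (\<chi> r. B $ p r)"
      by (simp add: B_def)
    also have "\<dots> = of_int (sign p) * det B" by (rule det_permute_rows[OF p])
    finally show "hh a (\<sigma> \<circ> p) = det B * (of_int (sign p) * (\<Prod>r\<in>UNIV. transpose B $ r $ p r))"
      by (simp add: hh_def B_def transpose_def)
  qed
  also have "\<dots> = det B * det (transpose B)"
    by (simp add: det_def sum_distrib_left)
  also have "\<dots> = (det B)^2" by (simp add: power2_eq_square)
  finally show ?thesis by simp
qed

lemma dec:
  fixes a :: "nat \<Rightarrow> real^'m"
  assumes "finite I"
  shows "det (wmat a I x) = (\<Sum>T\<in>{T. T \<subseteq> I \<and> card T = CARD('m)}. (\<Prod>i\<in>T. x i) * GG a T)"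
  unfolding L1[OF assms] by (rule L2[OF assms])

lemma smat_wmat: "smat a S = wmat a S (\<lambda>_. 1)"
  by (simp add: smat_def wmat_def)

theorem lemma1:
  fixes n k :: nat and a :: "nat \<Rightarrow> real^'m" and xh :: "nat \<Rightarrow> real" and wh \<alpha> :: real
    and \<mu> :: "nat set pmf"
  assumes "CARD('m) \<le> k" and "k \<le> n"
    and "relax_optimal n k a xh wh"
    and "0 < \<alpha>" and "\<alpha> \<le> 1"
    and "set_pmf \<mu> \<subseteq> {S. S \<subseteq> {1..n} \<and> card S = k}"
    and "pos_corr n CARD('m) \<alpha> xh \<mu>"
  shows "root CARD('m) (measure_pmf.expectation \<mu> (\<lambda>S. det (smat a S))) \<ge> \<alpha> * wstar n k a"
proof -
  define m where "m = CARD('m)"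
  have m0: "0 < m" by (simp add: m_def)
  let ?TT = "{T. T \<subseteq> {1..n} \<and> card T = m}"
  let ?A = "{S. S \<subseteq> {1..n} \<and> card S = k}"
  have fTT: "finite ?TT" by (auto intro: finite_subset[of _ "Pow {1..n}"])
  have fA: "finite ?A" by (auto intro: finite_subset[of _ "Pow {1..n}"])
  have fsp: "finite (set_pmf \<mu>)" using assms(6) fA finite_subset by blast
  have feas: "relax_feasible n k a xh wh" and opt: "\<And>x w. relax_feasible n k a x w \<Longrightarrow> w \<le> wh"
    using assms(3) unfolding relax_optimal_def by auto
  have pc: "\<And>T. T \<in> ?TT \<Longrightarrow> measure_pmf.prob \<mu> {S. T \<subseteq> S} \<ge> \<alpha> ^ m * (\<Prod>i\<in>T. xh i)"
    using assms(7) unfolding pos_corr_def m_def by auto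
  have detS: "det (smat a S) = (\<Sum>T\<in>?TT. GG a T * indicator {S. T \<subseteq> S} S)"
    if "S \<in> set_pmf \<mu>" for S
  proof -
    have Ssub: "S \<subseteq> {1..n}" and fS: "finite S" using that assms(6) by (auto intro: finite_subset)
    have "det (smat a S) = (\<Sum>T\<in>{T. T \<subseteq> S \<and> card T = m}. GG a T)"
      unfolding smat_wmat dec[OF fS] m_def by simp
    also have "{T. T \<subseteq> S \<and> card T = m} = {T\<in>?TT. T \<subseteq> S}" using Ssub by auto
    also have "(\<Sum>T\<in>{T\<in>?TT. T \<subseteq> S}. GG a T) = (\<Sum>T\<in>?TT. if T \<subseteq> S then GG a T else 0)"
      by (rule sum.inter_filter[OF fTT])
    also have "\<dots> = (\<Sum>T\<in>?TT. GG a T * indicator {S. T \<subseteq> S} S)"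
      by (rule sum.cong) (auto simp: indicator_def)
    finally show ?thesis .
  qed
  have "measure_pmf.expectation \<mu> (\<lambda>S. det (smat a S))
      = measure_pmf.expectation \<mu> (\<lambda>S. \<Sum>T\<in>?TT. GG a T * indicator {S. T \<subseteq> S} S)"
    using detS by (intro integral_cong_AE) (auto simp: AE_measure_pmf_iff)
  also have "\<dots> = (\<Sum>T\<in>?TT. GG a T * measure_pmf.prob \<mu> {S. T \<subseteq> S})"
    apply (subst Bochner_Integration.integral_sum)
     apply (rule integrable_measure_pmf_finite[OF fsp])
    apply (rule sum.cong[OF refl])
    apply (subst integral_mult_right_zero)
    apply simp
    done
  also have "\<dots> \<ge> (\<Sum>T\<in>?TT. GG a T * (\<alpha> ^ m * (\<Prod>i\<in>T. xh i)))"
    by (intro sum_mono mult_left_mono pc L3) (auto simp: m_def)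
  finally have E0: "(\<Sum>T\<in>?TT. GG a T * (\<alpha> ^ m * (\<Prod>i\<in>T. xh i))) \<le> measure_pmf.expectation \<mu> (\<lambda>S. det (smat a S))" .
  have "det (wmat a {1..n} xh) = (\<Sum>T\<in>?TT. (\<Prod>i\<in>T. xh i) * GG a T)"
    unfolding m_def by (rule dec) simp
  then have "\<alpha> ^ m * det (wmat a {1..n} xh) = (\<Sum>T\<in>?TT. GG a T * (\<alpha> ^ m * (\<Prod>i\<in>T. xh i)))"
    by (simp add: sum_distrib_left mult_ac)
  then have E1: "measure_pmf.expectation \<mu> (\<lambda>S. det (smat a S)) \<ge> \<alpha> ^ m * det (wmat a {1..n} xh)"
    using E0 by simp
  have "root m (measure_pmf.expectation \<mu> (\<lambda>S. det (smat a S))) \<ge> root m (\<alpha> ^ m * det (wmat a {1..n} xh))"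
    using E1 m0 by simp
  moreover have "root m (\<alpha> ^ m * det (wmat a {1..n} xh)) = \<alpha> * root m (det (wmat a {1..n} xh))"
    using m0 assms(4) by (simp add: real_root_mult real_root_power_cancel)
  moreover have "wh \<le> root m (det (wmat a {1..n} xh))"
    using feas unfolding relax_feasible_def m_def by simp
  moreover have "wstar n k a \<le> wh"
  proof -
    let ?W = "{root CARD('m) (det (smat a S)) | S. S \<subseteq> {1..n} \<and> card S = k}"
    have fW: "finite ?W" using fA by (simp add: setcompr_eq_image)
    have neW: "?W \<noteq> {}"
    proof -
      have "{1..k} \<subseteq> {1..n}" "card {1..k} = k" using assms(2) by auto
      then show ?thesis by blast
    qed
    have "w \<le> wh" if "w \<in> ?W" for w
    proof -
      obtain S where S: "S \<subseteq> {1..n}" "card S = k" and w: "w = root CARD('m) (det (smat a S))"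
        using \<open>w \<in> ?W\<close> by blast
      have fS: "finite S" using S(1) finite_subset by blast
      define x where "x = (\<lambda>i. if i \<in> S then 1 else (0::real))"
      have "wmat a {1..n} x = smat a S"
        unfolding wmat_def smat_def x_def using S(1)
        by (intro sum.mono_neutral_cong_right) auto
      moreover have "(\<Sum>i\<in>{1..n}. x i) = real k"
        unfolding x_def using S by (simp add: sum.If_cases Int_absorb1)
      ultimately have "relax_feasible n k a x w"
        unfolding relax_feasible_def w x_def by auto
      then show ?thesis by (rule opt)
    qed
    then show ?thesis unfolding wstar_def using fW neW by simp
  qed
  ultimately show ?thesis using assms(4) unfolding m_def
    by (smt (verit) mult_left_mono)
qed

end
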